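(* Let $G$ be a connected graph on $n$ vertices $1,2,\ldots,n$ with incidence matrix $M$ and let $M^+$ be the Moore-Penrose inverse of $M$. (a) If $G$ has an odd cycle, then $MM^+=I_n$. (b) If $G$ has no odd cycles (i.e., $G$ is bipartite), then $MM^+=I_n-\frac{1}{n}[(-1)^{d(i,j)}]$, where $[(-1)^{d(i,j)}]$ denotes the $n\times n$ matrix whose $(i,j)$-entry is $(-1)^{d(i,j)}$.
   Context: The incidence matrix $M$ of a graph with vertices $1,\ldots,n$ and edges $e_1,\ldots,e_m$ is the $n\times m$ matrix with $(i,j)$-entry $1$ if vertex $i$ is incident with $e_j$ and $0$ otherwise. $d(i,j)$ is the graph distance. The Moore-Penrose inverse of a real matrix $A$ is the unique $A^+$ with $AA^+A=A$, $A^+AA^+=A^+$, $(AA^+)^T=AA^+$, $(A^+A)^T=A^+A$. *)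

theory Defs
  imports "Jordan_Normal_Form.Matrix"
begin

text \<open>A graph on the vertices 0,...,n-1 (vertex i here is vertex i+1 of the paper)
  given by its list of edges e_1,...,e_m, each edge a 2-element set of vertices.\<close>

definition simple_graph :: "nat \<Rightarrow> nat set list \<Rightarrow> bool" where
  "simple_graph n E \<longleftrightarrow> distinct E \<and>
     (\<forall>e\<in>set E. \<exists>u v. e = {u, v} \<and> u \<noteq> v \<and> u < n \<and> v < n)"

definition adj :: "nat set list \<Rightarrow> nat \<Rightarrow> nat \<Rightarrow> bool" where
  "adj E u v \<longleftrightarrow> u \<noteq> v \<and> {u, v} \<in> set E"

definition walk :: "nat set list \<Rightarrow> nat list \<Rightarrow> bool" where
  "walk E xs \<longleftrightarrow> xs \<noteq> [] \<and> (\<forall>i. Suc i < length xs \<longrightarrow> adj E (xs ! i) (xs ! Suc i))"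

definition graph_connected :: "nat \<Rightarrow> nat set list \<Rightarrow> bool" where
  "graph_connected n E \<longleftrightarrow>
     (\<forall>u<n. \<forall>v<n. \<exists>xs. walk E xs \<and> hd xs = u \<and> last xs = v)"

definition graph_dist :: "nat set list \<Rightarrow> nat \<Rightarrow> nat \<Rightarrow> nat" where
  "graph_dist E u v =
     (LEAST k. \<exists>xs. walk E xs \<and> hd xs = u \<and> last xs = v \<and> length xs = Suc k)"

definition has_odd_cycle :: "nat set list \<Rightarrow> bool" where
  "has_odd_cycle E \<longleftrightarrow> (\<exists>vs. 3 \<le> length vs \<and> odd (length vs) \<and> distinct vs \<and>
      walk E vs \<and> adj E (last vs) (hd vs))"

definition incidence_matrix :: "nat \<Rightarrow> nat set list \<Rightarrow> real mat" where
  "incidence_matrix n E = mat n (length E) (\<lambda>(i, j). if i \<in> E ! j then 1 else 0)"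

definition is_moore_penrose_inverse :: "real mat \<Rightarrow> real mat \<Rightarrow> bool" where
  "is_moore_penrose_inverse A X \<longleftrightarrow> X \<in> carrier_mat (dim_col A) (dim_row A) \<and>
     A * X * A = A \<and> X * A * X = X \<and>
     transpose_mat (A * X) = A * X \<and> transpose_mat (X * A) = X * A"

definition moore_penrose_inverse :: "real mat \<Rightarrow> real mat" where
  "moore_penrose_inverse A = (THE X. is_moore_penrose_inverse A X)"

end

theory Submission imports Defs "Jordan_Normal_Form.Determinant" begin

lemma adj_sym: "adj E u v = adj E v u"
  unfolding adj_def by (auto simp: insert_commute)

lemma walk_single[simp]: "walk E [x]"
  unfolding walk_def by auto

lemma walk_Cons2[simp]: "walk E (x#y#xs) \<longleftrightarrow> adj E x y \<and> walk E (y#xs)"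
proof
  assume w: "walk E (x#y#xs)"
  have "Suc 0 < length (x#y#xs)" by simp
  then have "adj E ((x#y#xs) ! 0) ((x#y#xs) ! Suc 0)" using w unfolding walk_def by blast
  moreover have "walk E (y#xs)" unfolding walk_def
  proof (intro conjI allI impI)
    fix i assume "Suc i < length (y#xs)"
    then have "Suc (Suc i) < length (x#y#xs)" by simp
    then have "adj E ((x#y#xs) ! Suc i) ((x#y#xs) ! Suc (Suc i))" using w unfolding walk_def by blast
    then show "adj E ((y # xs) ! i) ((y # xs) ! Suc i)" by simp
  qed simp
  ultimately show "adj E x y \<and> walk E (y#xs)" by simp
next
  assume h: "adj E x y \<and> walk E (y#xs)"
  show "walk E (x#y#xs)" unfolding walk_def
  proof (intro conjI allI impI)
    fix i assume i: "Suc i < length (x#y#xs)"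
    show "adj E ((x#y#xs) ! i) ((x#y#xs) ! Suc i)"
    proof (cases i)
      case 0 then show ?thesis using h by simp
    next
      case (Suc k)
      then have "Suc k < length (y#xs)" using i by simp
      then have "adj E ((y#xs) ! k) ((y#xs) ! Suc k)" using h unfolding walk_def by blast
      then show ?thesis using Suc by simp
    qed
  qed simp
qed

lemma walk_Nil[simp]: "\<not> walk E []" unfolding walk_def by simp

lemma walk_append:
  assumes "walk E xs" "walk E ys" "adj E (last xs) (hd ys)"
  shows "walk E (xs @ ys)"
  using assms
proof (induction xs rule: induct_list012)
  case 1 then show ?case by simp
next
  case (2 x) then show ?case by (cases ys) auto
next
  case (3 x y zs) then show ?case by simp
qed

lemma walk_join:
  assumes "walk E xs" "walk E ys" "last xs = hd ys"
  shows "walk E (xs @ tl ys)"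
proof (cases ys)
  case Nil then show ?thesis using assms by simp
next
  case (Cons y zs)
  show ?thesis
  proof (cases zs)
    case Nil then show ?thesis using assms Cons by simp
  next
    case (Cons z ws)
    then show ?thesis using assms \<open>ys = y # zs\<close> by (auto intro!: walk_append)
  qed
qed

lemma walk_rev: "walk E xs \<Longrightarrow> walk E (rev xs)"
proof (induction xs rule: induct_list012)
  case (3 x y zs)
  then have "walk E (rev (y#zs))" by simp
  moreover have "adj E (last (rev (y#zs))) (hd [x])" using 3 by (simp add: adj_sym)
  ultimately show ?case using walk_append[of E "rev (y#zs)" "[x]"] by simp
qed auto

lemma walk_take: "walk E xs \<Longrightarrow> 0 < k \<Longrightarrow> walk E (take k xs)"
  unfolding walk_def
proof (intro conjI allI impI)
  fix i assume w: "xs \<noteq> [] \<and> (\<forall>i. Suc i < length xs \<longrightarrow> adj E (xs ! i) (xs ! Suc i))"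
    and k: "0 < k" and i: "Suc i < length (take k xs)"
  then have "Suc i < length xs" "Suc i < k" by auto
  then have "adj E (xs ! i) (xs ! Suc i)" using w by blast
  then show "adj E (take k xs ! i) (take k xs ! Suc i)" using \<open>Suc i < k\<close> by simp
next
  assume "xs \<noteq> [] \<and> (\<forall>i. Suc i < length xs \<longrightarrow> adj E (xs ! i) (xs ! Suc i))" "0 < k"
  then show "take k xs \<noteq> []" by simp
qed

lemma walk_drop: "walk E xs \<Longrightarrow> k < length xs \<Longrightarrow> walk E (drop k xs)"
  unfolding walk_def
proof (intro conjI allI impI)
  fix i assume w: "xs \<noteq> [] \<and> (\<forall>i. Suc i < length xs \<longrightarrow> adj E (xs ! i) (xs ! Suc i))"
    and k: "k < length xs" and i: "Suc i < length (drop k xs)"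
  then have "Suc (k + i) < length xs" by auto
  then have "adj E (xs ! (k + i)) (xs ! Suc (k + i))" using w by blast
  then show "adj E (drop k xs ! i) (drop k xs ! Suc i)" using k i by simp
next
  assume "xs \<noteq> [] \<and> (\<forall>i. Suc i < length xs \<longrightarrow> adj E (xs ! i) (xs ! Suc i))" "k < length xs"
  then show "drop k xs \<noteq> []" by simp
qed

lemma walk_adj: "walk E xs \<Longrightarrow> Suc i < length xs \<Longrightarrow> adj E (xs!i) (xs!Suc i)"
  unfolding walk_def by blast

lemma last_take_Suc: "i < length xs \<Longrightarrow> last (take (Suc i) xs) = xs ! i"
  by (simp add: take_Suc_conv_app_nth)

lemma last_drop_take_Suc: "i \<le> j \<Longrightarrow> j < length xs \<Longrightarrow> last (drop i (take (Suc j) xs)) = xs ! j"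
  by (simp add: take_Suc_conv_app_nth)

lemma odd_closed_walk:
  assumes "walk E xs" "hd xs = last xs" "even (length xs)"
  shows "has_odd_cycle E"
  using assms
proof (induction "length xs" arbitrary: xs rule: less_induct)
  case less
  have ne: "xs \<noteq> []" using less(2) by auto
  define k where "k = length xs - 1"
  have lk: "length xs = Suc k" using ne k_def by auto
  have ok: "odd k" using lk less(4) by auto
  define vs where "vs = take k xs"
  have lvs: "length vs = k" using lk vs_def by simp
  have k0: "0 < k" using ok by (cases k) auto
  have hdx: "hd xs = xs ! 0" using ne by (simp add: hd_conv_nth)
  have lastx: "last xs = xs ! k" using ne lk by (simp add: last_conv_nth)
  show ?case
  proof (cases "distinct vs")
    case True
    have k1: "k \<noteq> 1"
    proof
      assume "k = 1"
      then have "adj E (xs!0) (xs!1)" using walk_adj[OF less(2), of 0] lk by simp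
      then show False using less(3) hdx lastx \<open>k = 1\<close> by (simp add: adj_def)
    qed
    have "3 \<le> length vs" using lvs ok k1 k0
      by (metis One_nat_def Suc_leI dvd_refl le_neq_implies_less numeral_3_eq_3 odd_one odd_pos one_add_one
          plus_1_eq_Suc Suc_lessI even_Suc)
    moreover have "walk E vs" using walk_take[OF less(2) k0] vs_def by simp
    moreover have "adj E (last vs) (hd vs)"
    proof -
      have "vs \<noteq> []" using lvs k0 by auto
      then have "last vs = vs ! (k - 1)" using lvs by (simp add: last_conv_nth)
      then have "last vs = xs ! (k - 1)" using vs_def k0 by simp
      moreover have "hd vs = xs ! k" using vs_def k0 hdx less(3) lastx
        by (simp add: hd_conv_nth)
      ultimately show ?thesis using walk_adj[OF less(2), of "k-1"] lk k0 by simp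
    qed
    ultimately show ?thesis unfolding has_odd_cycle_def using True lvs ok by blast
  next
    case False
    then obtain i0 j0 where ij0: "i0 < k" "j0 < k" "i0 \<noteq> j0" "vs ! i0 = vs ! j0"
      using lvs by (auto simp: distinct_conv_nth)
    have "\<exists>i j. i < j \<and> j < k \<and> vs ! i = vs ! j"
    proof (cases "i0 < j0")
      case True then show ?thesis using ij0 by blast
    next
      case False then have "j0 < i0" using ij0(3) by simp
      then show ?thesis using ij0 by metis
    qed
    then obtain i j where ij: "i < j" "j < k" "vs ! i = vs ! j" by blast
    then have xij: "xs ! i = xs ! j" using vs_def by simp
    define ys where "ys = take (Suc i) xs @ drop (Suc j) xs"
    define zs where "zs = drop i (take (Suc j) xs)"
    have lys: "length ys = Suc k - (j - i)" using ys_def lk ij by simp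
    have lzs: "length zs = Suc j - i" using zs_def lk ij by simp
    have wys: "walk E ys" unfolding ys_def
    proof (rule walk_append)
      show "walk E (take (Suc i) xs)" using walk_take[OF less(2)] by simp
      show "walk E (drop (Suc j) xs)" using walk_drop[OF less(2)] ij lk by simp
      have "last (take (Suc i) xs) = xs ! i" using ij lk by (simp add: last_take_Suc)
      moreover have "hd (drop (Suc j) xs) = xs ! Suc j" using ij lk by (simp add: hd_drop_conv_nth)
      ultimately show "adj E (last (take (Suc i) xs)) (hd (drop (Suc j) xs))"
        using walk_adj[OF less(2), of j] ij lk xij by simp
    qed
    have hys: "hd ys = last ys"
    proof -
      have h1: "hd ys = hd xs" using ys_def ne by (cases xs) auto
      have dne: "drop (Suc j) xs \<noteq> []" using ij lk by simp
      have "last ys = last (drop (Suc j) xs)" using ys_def dne by simp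
      also have "\<dots> = last xs" using ij lk by (simp add: last_drop)
      finally show ?thesis using h1 less(3) by simp
    qed
    have wzs: "walk E zs" unfolding zs_def
      by (rule walk_drop, rule walk_take[OF less(2)], insert ij lk, auto)
    have hzs: "hd zs = last zs"
    proof -
      have "hd zs = xs ! i" using zs_def ij lk by (simp add: hd_drop_conv_nth)
      moreover have "last zs = xs ! j" unfolding zs_def by (rule last_drop_take_Suc) (use ij lk in auto)
      ultimately show ?thesis using xij by simp
    qed
    have "length ys + length zs = Suc (length xs)" using lys lzs lk ij by arith
    then have "odd (length ys + length zs)" using less(4) by simp
    then have disj: "even (length ys) \<or> even (length zs)" by auto
    have ly: "length ys < length xs" using lys lk ij by arith
    have lz: "length zs < length xs" using lzs lk ij by arith
    from disj show ?thesis
    proof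
      assume "even (length ys)"
      then show ?thesis using less(1)[OF ly wys hys] by blast
    next
      assume "even (length zs)"
      then show ?thesis using less(1)[OF lz wzs hzs] by blast
    qed
  qed
qed

lemma walk_parity:
  assumes "\<not> has_odd_cycle E" "walk E xs" "walk E ys" "hd xs = hd ys" "last xs = last ys"
  shows "even (length xs + length ys)"
proof (rule ccontr)
  assume o: "odd (length xs + length ys)"
  define zs where "zs = rev xs @ tl ys"
  have nx: "xs \<noteq> []" "ys \<noteq> []" using assms(2,3) by auto
  have wr: "walk E (rev xs)" using walk_rev[OF assms(2)] .
  have lr: "last (rev xs) = hd ys" using nx assms(4) by (simp add: last_rev)
  have w: "walk E zs" unfolding zs_def using walk_join[OF wr assms(3) lr] .
  have h1: "hd zs = last xs" using nx zs_def by (simp add: hd_rev)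
  have h2: "last zs = last ys"
  proof (cases "tl ys = []")
    case True
    then have "ys = [hd ys]" using nx by (metis list.collapse)
    then have "last ys = hd ys" by (metis last.simps list.sel(1))
    moreover have "last zs = hd xs" using True zs_def nx by (simp add: last_rev)
    ultimately show ?thesis using assms by simp
  next
    case False then show ?thesis using zs_def by (simp add: last_tl)
  qed
  have "length zs = length xs + length ys - 1" using zs_def nx by (cases ys) auto
  then have "even (length zs)" using o nx by (cases "length xs") auto
  moreover have "hd zs = last zs" using h1 h2 assms(5) by simp
  ultimately have "has_odd_cycle E" using odd_closed_walk[OF w] by blast
  then show False using assms(1) by blast
qed

lemma mp_unique:
  fixes A X Y :: "real mat"
  assumes A: "A \<in> carrier_mat n m"
  and X: "is_moore_penrose_inverse A X" and Y: "is_moore_penrose_inverse A Y"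
  shows "X = Y"
proof -
  have Xc: "X \<in> carrier_mat m n" and Yc: "Y \<in> carrier_mat m n"
    using X Y A unfolding is_moore_penrose_inverse_def by auto
  have cs: "A * Y \<in> carrier_mat n n" "Y * A \<in> carrier_mat m m" "A * X \<in> carrier_mat n n" "X * A \<in> carrier_mat m m"
    using A Xc Yc by auto
  note XX = X[unfolded is_moore_penrose_inverse_def] and YY = Y[unfolded is_moore_penrose_inverse_def]
  have e1: "(A * X) * (A * Y) = A * Y"
  proof -
    have "(A * X) * (A * Y) = (A * X * A) * Y" using A Xc Yc cs by (metis assoc_mult_mat mult_carrier_mat)
    then show ?thesis using XX by simp
  qed
  have e2: "(Y * A) * (X * A) = Y * A"
  proof -
    have "(Y * A) * (X * A) = Y * (A * X * A)" using A Xc Yc cs by (metis assoc_mult_mat mult_carrier_mat)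
    then show ?thesis using XX by simp
  qed
  have AX: "A * X = A * Y"
  proof -
    have "A * X = (A * Y * A) * X" using YY by simp
    also have "\<dots> = (A * Y) * (A * X)" using A Xc Yc cs by (metis assoc_mult_mat mult_carrier_mat)
    also have "\<dots> = transpose_mat (A * Y) * transpose_mat (A * X)" using XX YY by simp
    also have "\<dots> = transpose_mat ((A * X) * (A * Y))"
      using cs by (simp add: transpose_mult[of _ n n])
    also have "\<dots> = transpose_mat (A * Y)" using e1 by simp
    also have "\<dots> = A * Y" using YY by simp
    finally show ?thesis .
  qed
  have XA: "X * A = Y * A"
  proof -
    have "X * A = X * (A * Y * A)" using YY by simp
    also have "\<dots> = (X * A) * (Y * A)" using A Xc Yc cs by (metis assoc_mult_mat mult_carrier_mat)
    also have "\<dots> = transpose_mat (X * A) * transpose_mat (Y * A)" using XX YY by simp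
    also have "\<dots> = transpose_mat ((Y * A) * (X * A))"
      using cs by (simp add: transpose_mult[of _ m m])
    also have "\<dots> = transpose_mat (Y * A)" using e2 by simp
    also have "\<dots> = Y * A" using YY by simp
    finally show ?thesis .
  qed
  have "X = X * A * X" using XX by simp
  also have "\<dots> = X * (A * Y)" using AX A Xc Yc cs by (metis assoc_mult_mat mult_carrier_mat)
  also have "\<dots> = (Y * A) * Y" using XA A Xc Yc by (metis assoc_mult_mat)
  also have "\<dots> = Y" using YY by simp
  finally show ?thesis .
qed

lemma self_scalar_zero:
  fixes w :: "real vec"
  assumes "w \<bullet> w = 0" shows "w = 0\<^sub>v (dim_vec w)"
proof -
  have "(\<Sum>i\<in>{0..<dim_vec w}. w $ i * w $ i) = 0" using assms unfolding scalar_prod_def by simp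
  then have "\<forall>i\<in>{0..<dim_vec w}. w $ i * w $ i = 0"
    by (subst sum_nonneg_eq_0_iff[symmetric]) auto
  then show ?thesis by (intro eq_vecI) auto
qed

lemma mp_main:
  fixes M J :: "real mat"
  assumes M: "M \<in> carrier_mat n m" and J: "J \<in> carrier_mat n n" and Js: "transpose_mat J = J"
  and JM: "J * M = 0\<^sub>m n m" and JJ: "J * J = J"
  and ker: "\<And>x. x \<in> carrier_vec n \<Longrightarrow> transpose_mat M *\<^sub>v x = 0\<^sub>v m \<Longrightarrow> J *\<^sub>v x = x"
  shows "M * moore_penrose_inverse M = 1\<^sub>m n - J"
proof -
  define Mt where "Mt = transpose_mat M"
  have Mt: "Mt \<in> carrier_mat m n" using M Mt_def by simp
  define L where "L = M * Mt"
  have L: "L \<in> carrier_mat n n" using M Mt L_def by simp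
  define A where "A = L + J"
  have A: "A \<in> carrier_mat n n" using L J A_def by simp
  have MtJ: "Mt * J = 0\<^sub>m m n"
  proof -
    have "transpose_mat (J * M) = Mt * transpose_mat J" using transpose_mult[OF J M] Mt_def by simp
    then show ?thesis using JM Js by simp
  qed
  have JL: "J * L = 0\<^sub>m n n"
  proof -
    have "J * L = (J * M) * Mt" using J M Mt L_def by simp
    then show ?thesis using JM Mt by simp
  qed
  have JA: "J * A = J"
    using J L JL JJ A_def by (simp add: mult_add_distrib_mat)
  have Lt: "transpose_mat L = L" using transpose_mult[OF M Mt] L_def Mt_def by simp
  have At: "transpose_mat A = A" using transpose_add[OF L J] Lt Js A_def by simp
  have dA: "det A \<noteq> 0"
  proof
    assume "det A = 0"
    then obtain v where v: "v \<in> carrier_vec n" "v \<noteq> 0\<^sub>v n" "A *\<^sub>v v = 0\<^sub>v n"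
      using det_0_iff_vec_prod_zero_field[OF A] by blast
    have "J *\<^sub>v v = (J * A) *\<^sub>v v" using JA by simp
    also have "\<dots> = J *\<^sub>v (A *\<^sub>v v)" using J A v by simp
    also have "\<dots> = 0\<^sub>v n" using v J by (intro eq_vecI) auto
    finally have Jv: "J *\<^sub>v v = 0\<^sub>v n" .
    have "A *\<^sub>v v = L *\<^sub>v v + J *\<^sub>v v" using A_def L J v by (simp add: add_mult_distrib_mat_vec)
    then have Lv: "L *\<^sub>v v = 0\<^sub>v n" using v Jv L by simp
    define w where "w = Mt *\<^sub>v v"
    have w: "w \<in> carrier_vec m" using w_def Mt v by simp
    have "w \<bullet> w = v \<bullet> (M *\<^sub>v w)" using transpose_vec_mult_scalar[OF M w v(1)] w_def Mt_def by simp
    also have "M *\<^sub>v w = L *\<^sub>v v" using w_def L_def M Mt v by simp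
    finally have "w \<bullet> w = 0" using Lv v by simp
    then have "w = 0\<^sub>v m" using self_scalar_zero[of w] w by simp
    then have "J *\<^sub>v v = v" using ker[OF v(1)] w_def Mt_def by simp
    then show False using Jv v by simp
  qed
  from det_non_zero_imp_unit[OF A dA, of "()"]
  obtain Y where Y: "Y \<in> carrier_mat n n" and YA: "Y * A = 1\<^sub>m n" and AY: "A * Y = 1\<^sub>m n"
    unfolding Units_def ring_mat_def by auto
  have Yt: "transpose_mat Y = Y"
  proof -
    have "transpose_mat Y * A = 1\<^sub>m n" using transpose_mult[OF A Y] AY At by simp
    have "transpose_mat Y = transpose_mat Y * (A * Y)" using AY Y by simp
    also have "\<dots> = (transpose_mat Y * A) * Y" using Y A by simp
    also have "\<dots> = Y" using \<open>transpose_mat Y * A = 1\<^sub>m n\<close> Y by simp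
    finally show ?thesis .
  qed
  have JY: "J * Y = J"
  proof -
    have "J = J * (A * Y)" using AY J by simp
    also have "\<dots> = (J * A) * Y" using J A Y by simp
    finally show ?thesis using JA by simp
  qed
  have YJ: "Y * J = J" using transpose_mult[OF J Y] JY Yt Js by simp
  define P where "P = 1\<^sub>m n - J"
  have P: "P \<in> carrier_mat n n" using P_def J by (simp add: minus_carrier_mat)
  have Pt: "transpose_mat P = P" unfolding P_def using transpose_minus[OF one_carrier_mat J] Js by simp
  have LY: "L * Y = P"
  proof -
    have h: "L * Y + J = 1\<^sub>m n" using AY JY A_def L J Y by (simp add: add_mult_distrib_mat)
    show ?thesis
    proof (rule eq_matI)
      fix i j assume ij: "i < dim_row P" "j < dim_col P"
      have "(L * Y + J) $$ (i, j) = 1\<^sub>m n $$ (i, j)" using h by simp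
      then show "(L * Y) $$ (i, j) = P $$ (i, j)" using ij P L Y J unfolding P_def
        by (simp del: index_mult_mat)
    qed (use P L Y in auto)
  qed
  define X where "X = Mt * Y"
  have X: "X \<in> carrier_mat m n" using X_def Mt Y by simp
  have MX: "M * X = P" using X_def M Mt Y L_def LY by (metis assoc_mult_mat)
  have PM: "P * M = M"
  proof -
    have "P * M = 1\<^sub>m n * M - J * M" unfolding P_def using minus_mult_distrib_mat[OF one_carrier_mat J M] .
    also have "\<dots> = M" using JM M by (intro eq_matI) auto
    finally show ?thesis .
  qed
  have YP: "Y * P = Y - J"
  proof -
    have "Y * P = Y * 1\<^sub>m n - Y * J" unfolding P_def using mult_minus_distrib_mat[OF Y one_carrier_mat J] .
    then show ?thesis using YJ Y by simp
  qed
  have MP: "is_moore_penrose_inverse M X"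
    unfolding is_moore_penrose_inverse_def
  proof (intro conjI)
    show "X \<in> carrier_mat (dim_col M) (dim_row M)" using X M by simp
    show "M * X * M = M" using MX PM by simp
    have "X * M * X = X * (M * X)" using X M by simp
    also have "\<dots> = Mt * (Y * P)" using MX X_def Mt Y P by simp
    also have "\<dots> = Mt * Y - Mt * J" using YP mult_minus_distrib_mat[OF Mt Y J] by simp
    also have "\<dots> = X" using MtJ X_def Mt Y by (intro eq_matI) auto
    finally show "X * M * X = X" .
    show "transpose_mat (M * X) = M * X" using MX Pt by simp
    have "X * M = Mt * (Y * M)" using X_def Mt Y M by simp
    then have "transpose_mat (X * M) = transpose_mat (Y * M) * transpose_mat Mt"
      using transpose_mult[OF Mt, of "Y * M" m] Y M by simp
    also have "\<dots> = (Mt * Y) * M" using transpose_mult[OF Y M] Yt Mt_def by simp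
    finally show "transpose_mat (X * M) = X * M" using X_def by simp
  qed
  have "moore_penrose_inverse M = X"
    unfolding moore_penrose_inverse_def
    by (rule the_equality, rule MP, rule mp_unique[OF M _ MP])
  then show ?thesis using MX P_def by simp
qed

lemma walk_concat:
  assumes "walk E xs" "walk E ys" "hd xs = hd ys"
  shows "\<exists>zs. walk E zs \<and> hd zs = last xs \<and> last zs = last ys \<and> length zs = length xs + length ys - 1"
proof -
  define zs where "zs = rev xs @ tl ys"
  have nx: "xs \<noteq> []" "ys \<noteq> []" using assms(1,2) by auto
  have wr: "walk E (rev xs)" using walk_rev[OF assms(1)] .
  have lr: "last (rev xs) = hd ys" using nx assms(3) by (simp add: last_rev)
  have w: "walk E zs" unfolding zs_def using walk_join[OF wr assms(2) lr] .
  have h1: "hd zs = last xs" using nx zs_def by (simp add: hd_rev)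
  have h2: "last zs = last ys"
  proof (cases "tl ys = []")
    case True
    then have "ys = [hd ys]" using nx by (metis list.collapse)
    then have "last ys = hd ys" by (metis last.simps list.sel(1))
    moreover have "last zs = hd xs" using True zs_def nx by (simp add: last_rev)
    ultimately show ?thesis using assms by simp
  next
    case False then show ?thesis using zs_def by (simp add: last_tl)
  qed
  have "length zs = length xs + length ys - 1" using zs_def nx by (cases ys) auto
  then show ?thesis using w h1 h2 by blast
qed

lemma neg1_pow_eq: "even (a + b) \<Longrightarrow> (-1::real) ^ a = (-1) ^ b"
  by (cases "even a") (auto simp: minus_one_power_iff)

lemma neg1_pow_neq: "odd (a + b) \<Longrightarrow> (-1::real) ^ a + (-1) ^ b = 0"
  by (cases "even a") (auto simp: minus_one_power_iff)

lemma adj_lt: "simple_graph n E \<Longrightarrow> adj E u v \<Longrightarrow> u < n \<and> v < n"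
proof -
  assume sg: "simple_graph n E" and a: "adj E u v"
  then have "{u, v} \<in> set E" unfolding adj_def by blast
  then obtain a b where "{u, v} = {a, b}" "a < n" "b < n" using sg unfolding simple_graph_def by blast
  then show "u < n \<and> v < n" by (auto simp: doubleton_eq_iff)
qed

lemma adj_edge: "adj E u v \<Longrightarrow> \<exists>j<length E. E ! j = {u, v}"
  unfolding adj_def by (simp add: in_set_conv_nth)

lemma dist_walk:
  assumes "graph_connected n E" "u < n" "v < n"
  shows "\<exists>xs. walk E xs \<and> hd xs = u \<and> last xs = v \<and> length xs = Suc (graph_dist E u v)"
proof -
  obtain xs where xs: "walk E xs" "hd xs = u" "last xs = v"
    using assms unfolding graph_connected_def by blast
  then have "length xs = Suc (length xs - 1)" by (cases xs) auto
  then have "\<exists>xs. walk E xs \<and> hd xs = u \<and> last xs = v \<and> length xs = Suc (length xs - 1)" using xs by blast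
  then have "\<exists>k xs. walk E xs \<and> hd xs = u \<and> last xs = v \<and> length xs = Suc k" by blast
  then show ?thesis unfolding graph_dist_def by (rule LeastI_ex)
qed

lemma sign_walk:
  fixes f :: "nat \<Rightarrow> real"
  assumes f: "\<And>u v. adj E u v \<Longrightarrow> f u + f v = 0"
  shows "walk E xs \<Longrightarrow> f (last xs) = (-1) ^ (length xs - 1) * f (hd xs)"
proof (induction xs rule: induct_list012)
  case (3 x y zs)
  then have "f (last (y#zs)) = (-1) ^ (length (y#zs) - 1) * f y" by simp
  moreover have "f y = - f x" using f[of x y] 3 by simp
  ultimately show ?case by simp
qed auto

lemma incid_sum:
  fixes f :: "nat \<Rightarrow> real"
  assumes "e = {u, v}" "u \<noteq> v" "u < n" "v < n"
  shows "(\<Sum>k = 0..<n. f k * (if k \<in> e then 1 else 0)) = f u + f v"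
proof -
  have "(\<Sum>k = 0..<n. f k * (if k \<in> e then 1 else 0)) = (\<Sum>k = 0..<n. (if k \<in> e then f k else 0))"
    by (rule sum.cong) auto
  also have "\<dots> = (\<Sum>k \<in> {0..<n} \<inter> e. f k)"
    by (simp add: sum.inter_restrict)
  also have "{0..<n} \<inter> e = {u, v}" using assms by auto
  finally show ?thesis using assms by simp
qed

lemma ker_adj:
  assumes sg: "simple_graph n E" and x: "x \<in> carrier_vec n"
  and k: "transpose_mat (incidence_matrix n E) *\<^sub>v x = 0\<^sub>v (length E)"
  and a: "adj E u v"
  shows "x $ u + x $ v = 0"
proof -
  obtain j where j: "j < length E" "E ! j = {u, v}" using adj_edge[OF a] by blast
  have uv: "u < n" "v < n" "u \<noteq> v" using adj_lt[OF sg a] a by (auto simp: adj_def)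
  have "(transpose_mat (incidence_matrix n E) *\<^sub>v x) $ j = 0" using k j by simp
  moreover have "(transpose_mat (incidence_matrix n E) *\<^sub>v x) $ j
     = (\<Sum>k = 0..<n. x $ k * (if k \<in> E ! j then 1 else 0))"
    using j x unfolding incidence_matrix_def
    by (simp add: scalar_prod_def mult.commute)
  ultimately show ?thesis using incid_sum[OF j(2) uv(3) uv(1,2)] by simp
qed

theorem mainTheorem7:
  fixes n :: nat and E :: "nat set list"
  assumes "simple_graph n E" and "graph_connected n E"
  defines "M \<equiv> incidence_matrix n E"
  shows "(has_odd_cycle E \<longrightarrow> M * moore_penrose_inverse M = 1\<^sub>m n) \<and>
         (\<not> has_odd_cycle E \<longrightarrow> M * moore_penrose_inverse M =
            1\<^sub>m n - (1 / real n) \<cdot>\<^sub>m mat n n (\<lambda>(i, j). (-1) ^ graph_dist E i j))"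
proof -
  note sg = assms(1) and con = assms(2)
  define m where "m = length E"
  have Mc: "M \<in> carrier_mat n m" unfolding M_def incidence_matrix_def m_def by simp
  have Mij: "M $$ (i, j) = (if i \<in> E ! j then 1 else 0)" if "i < n" "j < m" for i j
    using that unfolding M_def incidence_matrix_def m_def by simp
  have kerA: "x $ u + x $ v = 0"
    if "x \<in> carrier_vec n" "transpose_mat M *\<^sub>v x = 0\<^sub>v m" "adj E u v" for x u v
    using ker_adj[OF sg that(1) _ that(3)] that(2) unfolding M_def m_def by simp
  show ?thesis
  proof (intro conjI impI)
    assume odd: "has_odd_cycle E"
    then obtain vs where vs: "3 \<le> length vs" "odd (length vs)" "walk E vs" "adj E (last vs) (hd vs)"
      unfolding has_odd_cycle_def by blast
    define c where "c = hd vs"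
    have cn: "c < n" using adj_lt[OF sg vs(4)] c_def by simp
    have ker0: "x = 0\<^sub>v n" if x: "x \<in> carrier_vec n" "transpose_mat M *\<^sub>v x = 0\<^sub>v m" for x
    proof -
      have f: "\<And>u v. adj E u v \<Longrightarrow> x $ u + x $ v = 0" using kerA[OF x] by blast
      have wc: "walk E (vs @ [c])" using walk_append[OF vs(3) walk_single] vs(4) c_def by simp
      have "x $ c = (-1) ^ (length (vs @ [c]) - 1) * x $ c"
        using sign_walk[of E "\<lambda>k. x $ k", OF f wc] vs c_def by (cases vs) auto
      then have "x $ c = - x $ c" using vs(2) by simp
      then have x0: "x $ c = 0" by simp
      show ?thesis
      proof (rule eq_vecI)
        fix i assume "i < dim_vec (0\<^sub>v n)"
        then have i: "i < n" by simp
        obtain w where w: "walk E w" "hd w = c" "last w = i" using dist_walk[OF con cn i] by blast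
        have "x $ i = (-1) ^ (length w - 1) * x $ c"
          using sign_walk[of E "\<lambda>k. x $ k", OF f w(1)] w by simp
        then show "x $ i = 0\<^sub>v n $ i" using x0 i by simp
      qed (use x in simp)
    qed
    have "M * moore_penrose_inverse M = 1\<^sub>m n - 0\<^sub>m n n"
    proof (rule mp_main[OF Mc])
      fix x :: "real vec" assume x: "x \<in> carrier_vec n" "transpose_mat M *\<^sub>v x = 0\<^sub>v m"
      have "x = 0\<^sub>v n" using ker0[OF x] .
      then show "0\<^sub>m n n *\<^sub>v x = x" by (intro eq_vecI) auto
    qed (use Mc in \<open>auto simp: carrier_matD\<close>)
    also have "\<dots> = 1\<^sub>m n" by (intro eq_matI) auto
    finally show "M * moore_penrose_inverse M = 1\<^sub>m n" .
  next
    assume nodd: "\<not> has_odd_cycle E"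
    define s where "s k = (-1::real) ^ (graph_dist E 0 k)" for k
    have s2: "s k * s k = 1" for k
      unfolding s_def by (simp add: power_mult_distrib[symmetric])
    have B1: "s u + s v = 0" if a: "adj E u v" for u v
    proof -
      have uv: "u < n" "v < n" using adj_lt[OF sg a] by auto
      then have n0: "0 < n" by simp
      obtain wu where wu: "walk E wu" "hd wu = 0" "last wu = u" "length wu = Suc (graph_dist E 0 u)"
        using dist_walk[OF con n0 uv(1)] by blast
      obtain wv where wv: "walk E wv" "hd wv = 0" "last wv = v" "length wv = Suc (graph_dist E 0 v)"
        using dist_walk[OF con n0 uv(2)] by blast
      have w2: "walk E (wu @ [v])" using walk_append[OF wu(1) walk_single] a wu(3) by simp
      have "even (length (wu @ [v]) + length wv)"
        by (rule walk_parity[OF nodd w2 wv(1)]) (use wu wv in \<open>cases wu, auto\<close>)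
      then have "odd (graph_dist E 0 u + graph_dist E 0 v)" using wu wv by simp
      then show ?thesis unfolding s_def by (rule neg1_pow_neq)
    qed
    have B2: "s i * s j = (-1) ^ graph_dist E i j" if ij: "i < n" "j < n" for i j
    proof -
      have n0: "0 < n" using ij by simp
      obtain wi where wi: "walk E wi" "hd wi = 0" "last wi = i" "length wi = Suc (graph_dist E 0 i)"
        using dist_walk[OF con n0 ij(1)] by blast
      obtain wj where wj: "walk E wj" "hd wj = 0" "last wj = j" "length wj = Suc (graph_dist E 0 j)"
        using dist_walk[OF con n0 ij(2)] by blast
      obtain wij where wij: "walk E wij" "hd wij = i" "last wij = j" "length wij = Suc (graph_dist E i j)"
        using dist_walk[OF con ij] by blast
      obtain zs where zs: "walk E zs" "hd zs = i" "last zs = j"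
        "length zs = Suc (graph_dist E 0 i + graph_dist E 0 j)"
        using walk_concat[OF wi(1) wj(1)] wi wj by auto
      have "even (length zs + length wij)"
        by (rule walk_parity[OF nodd zs(1) wij(1)]) (use zs wij in auto)
      then have "even (graph_dist E 0 i + graph_dist E 0 j + graph_dist E i j)" using zs wij by simp
      then have "(-1::real) ^ (graph_dist E 0 i + graph_dist E 0 j) = (-1) ^ graph_dist E i j"
        by (rule neg1_pow_eq)
      then show ?thesis unfolding s_def by (simp add: power_add)
    qed
    have kers: "x $ k = s k * x $ 0"
      if x: "x \<in> carrier_vec n" "transpose_mat M *\<^sub>v x = 0\<^sub>v m" and k: "k < n" for x k
    proof -
      have f: "\<And>u v. adj E u v \<Longrightarrow> x $ u + x $ v = 0" using kerA[OF x] by blast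
      have n0: "0 < n" using k by simp
      obtain w where w: "walk E w" "hd w = 0" "last w = k" "length w = Suc (graph_dist E 0 k)"
        using dist_walk[OF con n0 k] by blast
      show ?thesis using sign_walk[of E "\<lambda>k. x $ k", OF f w(1)] w unfolding s_def by simp
    qed
    define J where "J = mat n n (\<lambda>(i, j). s i * s j / real n)"
    have Jc: "J \<in> carrier_mat n n" unfolding J_def by simp
    have Jij: "J $$ (i, j) = s i * s j / real n" if "i < n" "j < n" for i j
      using that unfolding J_def by simp
    have "M * moore_penrose_inverse M = 1\<^sub>m n - J"
    proof (rule mp_main[OF Mc Jc])
      show "transpose_mat J = J" by (rule eq_matI) (auto simp: J_def mult.commute)
      show "J * M = 0\<^sub>m n m"
      proof (rule eq_matI)
        fix i j assume ij: "i < dim_row (0\<^sub>m n m)" "j < dim_col (0\<^sub>m n m)"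
        then have i: "i < n" and j: "j < m" by auto
        obtain u v where uv: "E ! j = {u, v}" "u \<noteq> v" "u < n" "v < n" "adj E u v"
          using sg j unfolding simple_graph_def m_def adj_def by (metis nth_mem)
        have "(J * M) $$ (i, j) = (\<Sum>k = 0..<n. J $$ (i, k) * M $$ (k, j))"
          using i j Mc Jc by (simp add: scalar_prod_def)
        also have "\<dots> = (\<Sum>k = 0..<n. (s i / real n) * (s k * (if k \<in> E ! j then 1 else 0)))"
          by (rule sum.cong) (auto simp: Jij Mij i j)
        also have "\<dots> = (s i / real n) * (\<Sum>k = 0..<n. s k * (if k \<in> E ! j then 1 else 0))"
          by (simp add: sum_distrib_left)
        also have "\<dots> = (s i / real n) * (s u + s v)" using incid_sum[OF uv(1-4)] by simp
        also have "\<dots> = 0" using B1[OF uv(5)] by simp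
        finally show "(J * M) $$ (i, j) = 0\<^sub>m n m $$ (i, j)" using i j by simp
      qed (use Mc Jc in auto)
      show "J * J = J"
      proof (rule eq_matI)
        fix i j assume ij: "i < dim_row J" "j < dim_col J"
        then have i: "i < n" and j: "j < n" using Jc by auto
        have "(J * J) $$ (i, j) = (\<Sum>k = 0..<n. J $$ (i, k) * J $$ (k, j))"
          using i j Jc by (simp add: scalar_prod_def)
        also have "\<dots> = (\<Sum>k = 0..<n. s i * s j / (real n * real n))"
        proof (rule sum.cong)
          fix k assume "k \<in> {0..<n}"
          then have "J $$ (i, k) * J $$ (k, j) = s i * s j * (s k * s k) / (real n * real n)"
            using i j by (simp add: Jij)
          then show "J $$ (i, k) * J $$ (k, j) = s i * s j / (real n * real n)" using s2 by simp
        qed simp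
        also have "\<dots> = s i * s j / real n" using i by simp
        finally show "(J * J) $$ (i, j) = J $$ (i, j)" using Jij i j by simp
      qed (use Jc in auto)
      fix x :: "real vec" assume x: "x \<in> carrier_vec n" "transpose_mat M *\<^sub>v x = 0\<^sub>v m"
      show "J *\<^sub>v x = x"
      proof (rule eq_vecI)
        fix i assume "i < dim_vec x"
        then have i: "i < n" using x by simp
        have "(J *\<^sub>v x) $ i = (\<Sum>k = 0..<n. J $$ (i, k) * x $ k)"
          using i x Jc by (simp add: scalar_prod_def)
        also have "\<dots> = (\<Sum>k = 0..<n. s i * x $ 0 / real n)"
        proof (rule sum.cong)
          fix k assume k: "k \<in> {0..<n}"
          then have "J $$ (i, k) * x $ k = s i * (s k * s k) * x $ 0 / real n"
            using i kers[OF x, of k] by (simp add: Jij)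
          then show "J $$ (i, k) * x $ k = s i * x $ 0 / real n" using s2 by simp
        qed simp
        also have "\<dots> = s i * x $ 0" using i by simp
        also have "\<dots> = x $ i" using kers[OF x i] s2[of i]
          by (metis mult.assoc mult_1)
        finally show "(J *\<^sub>v x) $ i = x $ i" .
      qed (use x Jc in simp)
    qed
    also have "\<dots> = 1\<^sub>m n - (1 / real n) \<cdot>\<^sub>m mat n n (\<lambda>(i, j). (-1) ^ graph_dist E i j)"
    proof -
      have dJ: "dim_row J = n" "dim_col J = n" using Jc by auto
      show ?thesis by (rule eq_matI) (auto simp: Jij B2 dJ)
    qed
    finally show "M * moore_penrose_inverse M =
            1\<^sub>m n - (1 / real n) \<cdot>\<^sub>m mat n n (\<lambda>(i, j). (-1) ^ graph_dist E i j)" .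
  qed
qed

end
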